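(* Let $\theta_N=1+N^{-2/3}w_N$ where $w_N>0$, $(\log\log N)^2/w_N\to0$ and $w_N/(\log N)^2\to0$. For $1\le i\le N$ let $r_i=1+\sqrt{1-\frac{i-1}{N\theta_N^2}}$, $m_i=1-\sqrt{1-\frac{i-1}{N\theta_N^2}}$, $\gamma_i=m_i/r_i$, and $g_i=1+\gamma_i+\gamma_i\gamma_{i+1}+\dots+\gamma_i\gamma_{i+1}\cdots\gamma_N$. Then for every $k>0$, for all sufficiently large $N$ and all $3\le i\le N-N^{1/3}$, \[ g_i>\frac{r_i}{2(r_i-1)}\big(1-\log^{-k}N\big); \] and for all sufficiently large $N$ and all $3\le i\le N$, \[ g_i<\frac{r_i}{2(r_i-1)}\big(1+w_N^{-3/2}\big). \] *)

theory Defs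
  imports Complex_Main
begin

definition theta :: "(nat \<Rightarrow> real) \<Rightarrow> nat \<Rightarrow> real" where
  "theta w N = 1 + real N powr (-2/3) * w N"

definition rr :: "(nat \<Rightarrow> real) \<Rightarrow> nat \<Rightarrow> nat \<Rightarrow> real" where
  "rr w N i = 1 + sqrt (1 - (real i - 1) / (real N * (theta w N)^2))"

definition mm :: "(nat \<Rightarrow> real) \<Rightarrow> nat \<Rightarrow> nat \<Rightarrow> real" where
  "mm w N i = 1 - sqrt (1 - (real i - 1) / (real N * (theta w N)^2))"

definition gam :: "(nat \<Rightarrow> real) \<Rightarrow> nat \<Rightarrow> nat \<Rightarrow> real" where
  "gam w N i = mm w N i / rr w N i"

text \<open>g_i = 1 + gamma_i + gamma_i gamma_(i+1) + ... + gamma_i ... gamma_N;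
  the term with index j is the product of gamma_l for l from i to j-1,
  j ranging over i..N+1 (j = i gives the empty product 1).\<close>
definition gg :: "(nat \<Rightarrow> real) \<Rightarrow> nat \<Rightarrow> nat \<Rightarrow> real" where
  "gg w N i = (\<Sum>j = i..N+1. \<Prod>l = i..<j. gam w N l)"

end

theory Submission imports Defs "HOL-Real_Asymp.Real_Asymp" begin

definition ss :: "(nat \<Rightarrow> real) \<Rightarrow> nat \<Rightarrow> nat \<Rightarrow> real" where
  "ss w N i = sqrt (1 - (real i - 1) / (real N * (theta w N)^2))"

lemma rr_ss: "rr w N i = 1 + ss w N i" by (simp add: rr_def ss_def)
lemma mm_ss: "mm w N i = 1 - ss w N i" by (simp add: mm_def ss_def)

lemma arg_bounds:
  assumes t: "theta w N > 1" and N: "N \<ge> 1" and i: "1 \<le> i" "i \<le> N+1"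
  shows "(real i - 1) / (real N * (theta w N)^2) \<le> 1/(theta w N)^2"
        "0 \<le> (real i - 1) / (real N * (theta w N)^2)"
proof -
  let ?t = "theta w N"
  have p: "real N * ?t^2 > 0" using t N by simp
  have "(real i - 1) \<le> real N" using i by linarith
  then have "(real i - 1) / (real N * ?t^2) \<le> real N / (real N * ?t^2)"
    using p by (intro divide_right_mono) auto
  also have "\<dots> = 1/?t^2" using N by simp
  finally show "(real i - 1) / (real N * ?t^2) \<le> 1/?t^2" .
  show "0 \<le> (real i - 1) / (real N * ?t^2)" using p i by simp
qed

lemma ss_bounds:
  assumes t: "theta w N > 1" and N: "N \<ge> 1" and i: "1 \<le> i" "i \<le> N+1"
  shows "sqrt (1 - 1/(theta w N)^2) \<le> ss w N i" "ss w N i \<le> 1"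
  using arg_bounds[OF assms] unfolding ss_def by simp_all

lemma sig_pos:
  assumes t: "theta w N > 1" shows "sqrt (1 - 1/(theta w N)^2) > 0"
proof -
  have "(theta w N)^2 > 1" using t by (simp add: one_less_power)
  then have "1/(theta w N)^2 < 1" by (simp add: divide_less_eq)
  then show ?thesis by simp
qed

lemma ss_mono:
  assumes t: "theta w N > 1" and N: "N \<ge> 1" and ij: "i \<le> j"
  shows "ss w N j \<le> ss w N i"
proof -
  let ?t = "theta w N"
  have p: "real N * ?t^2 > 0" using t N by simp
  have "(real i - 1) / (real N * ?t^2) \<le> (real j - 1) / (real N * ?t^2)"
    using p ij by (intro divide_right_mono) auto
  then show ?thesis unfolding ss_def by (intro real_sqrt_le_mono) linarith
qed

lemma ss_sq:
  assumes t: "theta w N > 1" and N: "N \<ge> 1" and i: "1 \<le> i" "i \<le> N+1"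
  shows "(ss w N i)^2 = 1 - (real i - 1) / (real N * (theta w N)^2)"
proof -
  have "1/(theta w N)^2 \<le> 1" using t by (simp add: one_le_power)
  then show ?thesis using arg_bounds[OF assms] unfolding ss_def by (subst real_sqrt_pow2) auto
qed

lemma ss_diff:
  assumes t: "theta w N > 1" and N: "N \<ge> 1" and i: "1 \<le> i" "i \<le> N"
  shows "(ss w N i)^2 - (ss w N (Suc i))^2 = 1 / (real N * (theta w N)^2)"
  using ss_sq[OF t N, of i] ss_sq[OF t N, of "Suc i"] i
  by (simp add: diff_divide_distrib[symmetric])


lemma gg_last: "gg w N (N+1) = 1" by (simp add: gg_def)

lemma gg_rec: assumes "i \<le> N" shows "gg w N i = 1 + gam w N i * gg w N (Suc i)"
proof -
  have "gg w N i = (\<Prod>l = i..<i. gam w N l) + (\<Sum>j = Suc i..N+1. \<Prod>l = i..<j. gam w N l)"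
    unfolding gg_def using assms by (subst sum.atLeast_Suc_atMost) auto
  also have "(\<Sum>j = Suc i..N+1. \<Prod>l = i..<j. gam w N l) = (\<Sum>j = Suc i..N+1. gam w N i * (\<Prod>l = Suc i..<j. gam w N l))"
    by (intro sum.cong refl, subst prod.atLeast_Suc_lessThan) auto
  also have "(\<Sum>j = Suc i..N+1. gam w N i * (\<Prod>l = Suc i..<j. gam w N l)) = gam w N i * gg w N (Suc i)"
    by (simp only: gg_def sum_distrib_left)
  finally show ?thesis by simp
qed

lemma gg_lower:
  assumes i: "i \<le> N+1" and g0: "0 \<le> gam w N i" and g1: "gam w N i < 1"
    and mono: "\<And>l. i \<le> l \<Longrightarrow> l \<le> N \<Longrightarrow> gam w N i \<le> gam w N l"
  shows "gg w N i \<ge> (1 - gam w N i ^ (N+2-i)) / (1 - gam w N i)"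
proof -
  let ?g = "gam w N i"
  have "(\<Sum>j = i..N+1. ?g ^ (j - i)) \<le> gg w N i" unfolding gg_def
  proof (intro sum_mono)
    fix j assume j: "j \<in> {i..N+1}"
    have "(\<Prod>l = i..<j. ?g) \<le> (\<Prod>l = i..<j. gam w N l)"
      using j g0 mono by (intro prod_mono) auto
    then show "?g ^ (j - i) \<le> (\<Prod>l = i..<j. gam w N l)" by simp
  qed
  moreover have "(\<Sum>j = i..N+1. ?g ^ (j - i)) = (\<Sum>t<N+2-i. ?g ^ t)"
  proof -
    have "(\<Sum>j = i..N+1. ?g ^ (j - i)) = (\<Sum>t = 0..N+1-i. ?g ^ t)"
      using i by (subst sum.atLeastAtMost_shift_0) auto
    also have "\<dots> = (\<Sum>t<N+2-i. ?g ^ t)" using i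
      by (intro sum.cong) auto
    finally show ?thesis .
  qed
  moreover have "(\<Sum>t<N+2-i. ?g ^ t) = (1 - ?g ^ (N+2-i)) / (1 - ?g)"
    using g1 by (subst sum_gp_strict) auto
  ultimately show ?thesis by simp
qed


lemma step_ineq:
  fixes s s' a \<sigma> :: real
  assumes "0 < \<sigma>" "\<sigma> \<le> s'" "s' \<le> s" "s \<le> 1" "s^2 - s'^2 = a"
  shows "(1-s)/(1+s) * ((1+s')/(2*s') - (1+s)/(2*s)) \<le> a/(4*\<sigma>^3)"
proof -
  have d: "(1+s')/(2*s') - (1+s)/(2*s) = a / (2*s*s'*(s+s'))"
  proof -
    have p: "s > 0" "s' > 0" using assms by auto
    have "a = (s-s')*(s+s')" using assms(5) by (simp add: power2_eq_square algebra_simps)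
    then have "a / (2*s*s'*(s+s')) = (s-s')/(2*s*s')" using p by simp
    also have "\<dots> = (1+s')/(2*s') - (1+s)/(2*s)" using p by (simp add: field_simps)
    finally show ?thesis by simp
  qed
  have "s'^2 \<le> s^2" using assms by (intro power_mono) auto
  then have a0: "a \<ge> 0" using assms(5) by linarith
  have "4*\<sigma>^3 \<le> 2*s*s'*(s+s')"
  proof -
    have "\<sigma>*\<sigma> \<le> s*s'" using assms by (intro mult_mono) auto
    moreover have "2*\<sigma> \<le> s+s'" using assms by auto
    ultimately have "(\<sigma>*\<sigma>)*(2*\<sigma>) \<le> (s*s')*(s+s')" using assms
      by (intro mult_mono) auto
    then show ?thesis by (simp add: power3_eq_cube algebra_simps)
  qed
  then have b: "a / (2*s*s'*(s+s')) \<le> a/(4*\<sigma>^3)" using a0 assms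
    by (intro divide_left_mono) auto
  have g: "0 \<le> (1-s)/(1+s)" "(1-s)/(1+s) \<le> 1" using assms by auto
  have "0 \<le> a / (2*s*s'*(s+s'))" using a0 assms by auto
  then have "(1-s)/(1+s) * (a / (2*s*s'*(s+s'))) \<le> 1 * (a / (2*s*s'*(s+s')))"
    using g by (intro mult_right_mono) auto
  then show ?thesis using d b by simp
qed


lemma gam_ss: "gam w N i = (1 - ss w N i)/(1 + ss w N i)"
  by (simp add: gam_def rr_ss mm_ss)

lemma f_ss: "rr w N i / (2 * (rr w N i - 1)) = (1 + ss w N i)/(2 * ss w N i)"
  by (simp add: rr_ss)

lemma fid_gen: fixes s :: real assumes "0 < s"
  shows "(1 + s)/(2 * s) = 1 + (1-s)/(1+s) * ((1 + s)/(2 * s))"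
proof -
  have "(1-s)/(1+s) * ((1 + s)/(2 * s)) = (1-s)/(2*s)" using assms by simp
  also have "1 + \<dots> = (1 + s)/(2 * s)" using assms by (simp add: field_simps)
  finally show ?thesis by simp
qed

lemma div_aux: fixes a b c :: real assumes "c \<noteq> 0" shows "(c + a*b)/c = 1 + a*(b/c)"
  using assms by (simp add: add_divide_distrib)

lemma upper_core:
  assumes t: "theta w N > 1" and N: "N \<ge> 1"
    and dl: "\<delta> = (1/(real N * (theta w N)^2)) / (4 * (sqrt (1 - 1/(theta w N)^2))^3)"
    and d1: "\<delta> < 1" and i: "1 \<le> i" "i \<le> N+1"
  shows "gg w N i \<le> (1 + ss w N i)/(2 * ss w N i) / (1 - \<delta>)"
  using i(2)
proof (induction i rule: inc_induct)
  case base
  let ?s = "ss w N (N+1)"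
  have sg: "0 < sqrt (1 - 1/(theta w N)^2)" by (rule sig_pos[OF t])
  have sb: "sqrt (1 - 1/(theta w N)^2) \<le> ?s" "?s \<le> 1" using ss_bounds[OF t N, of "N+1"] by auto
  have s: "0 < ?s" "?s \<le> 1" using sg sb by linarith+
  have d0: "0 \<le> \<delta>" unfolding dl using sg N by simp
  have "1 \<le> (1 + ?s)/(2 * ?s)" using s by (simp add: field_simps)
  also have "\<dots> \<le> (1 + ?s)/(2 * ?s) / (1 - \<delta>)"
  proof -
    have x0: "0 \<le> (1 + ?s)/(2 * ?s)" using s by simp
    have "x * (1 - \<delta>) \<le> x" if "0 \<le> x" for x :: real
      using mult_nonneg_nonneg[OF that d0] by (simp add: algebra_simps)
    from this[OF x0] have "(1 + ?s)/(2 * ?s) * (1 - \<delta>) \<le> (1 + ?s)/(2 * ?s)" .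
    moreover have "0 < 1 - \<delta>" using d1 by simp
    ultimately show ?thesis by (rule pos_le_divide_eq[THEN iffD2, rotated])
  qed
  finally show ?case using gg_last[of w N] by simp
next
  case (step n)
  let ?s = "ss w N n" and ?s' = "ss w N (Suc n)" and ?\<sigma> = "sqrt (1 - 1/(theta w N)^2)"
  have n: "1 \<le> n" "n \<le> N" using step i by auto
  have bs: "?\<sigma> \<le> ?s'" "?s' \<le> ?s" "?s \<le> 1" "0 < ?\<sigma>"
    using ss_bounds[OF t N, of "Suc n"] ss_bounds[OF t N, of n] ss_mono[OF t N, of n "Suc n"] sig_pos[OF t] n
    by auto
  have key: "(1-?s)/(1+?s) * ((1+?s')/(2*?s') - (1+?s)/(2*?s)) \<le> \<delta>"
    using step_ineq[OF bs(4) bs(1) bs(2) bs(3) ss_diff[OF t N n]] dl by simp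
  have sp: "0 < ?s" "?s \<le> 1" using bs by linarith+
  have g0: "0 \<le> gam w N n" unfolding gam_ss using sp by (intro divide_nonneg_nonneg) auto
  have "gg w N n = 1 + gam w N n * gg w N (Suc n)" using gg_rec n by simp
  also have "\<dots> \<le> 1 + gam w N n * ((1 + ?s')/(2 * ?s') / (1 - \<delta>))"
    using mult_left_mono[OF step.IH g0] by simp
  also have "\<dots> \<le> (1 + ?s)/(2 * ?s) / (1 - \<delta>)"
  proof -
    have fid: "(1 + ?s)/(2 * ?s) = 1 + (1-?s)/(1+?s) * ((1 + ?s)/(2 * ?s))"
      using fid_gen sp by blast
    have dist: "(1-?s)/(1+?s) * ((1 + ?s')/(2 * ?s') - (1 + ?s)/(2 * ?s))
       = (1-?s)/(1+?s) * ((1 + ?s')/(2 * ?s')) - (1-?s)/(1+?s) * ((1 + ?s)/(2 * ?s))"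
      by (rule right_diff_distrib)
    have "(1 - \<delta>) + (1-?s)/(1+?s) * ((1 + ?s')/(2 * ?s')) \<le> (1 + ?s)/(2 * ?s)"
      using key fid dist by linarith
    then have "((1 - \<delta>) + (1-?s)/(1+?s) * ((1 + ?s')/(2 * ?s')))/(1-\<delta>) \<le> (1 + ?s)/(2 * ?s)/(1-\<delta>)"
      using d1 by (intro divide_right_mono) auto
    moreover have "((1 - \<delta>) + (1-?s)/(1+?s) * ((1 + ?s')/(2 * ?s')))/(1-\<delta>)
        = 1 + (1-?s)/(1+?s) * ((1 + ?s')/(2 * ?s') / (1-\<delta>))"
      by (rule div_aux) (use d1 in simp)
    ultimately show ?thesis unfolding gam_ss by linarith
  qed
  finally show ?case .
qed


lemma gam_exp: fixes s :: real assumes "0 \<le> s" "s \<le> 1"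
  shows "(1-s)/(1+s) \<le> exp (-s)"
proof -
  have a: "1 - s \<le> exp (-s)" using exp_ge_add_one_self[of "-s"] by simp
  have "(1 - s) * 1 \<le> (1 - s) * (1 + s)" using assms by (intro mult_left_mono) auto
  then have "(1-s)/(1+s) \<le> 1 - s" using assms by (intro pos_divide_le_eq[THEN iffD2]) auto
  then show ?thesis using a by linarith
qed

lemma lower_core:
  assumes t: "theta w N > 1" and N: "N \<ge> 1" and i: "1 \<le> i" "i \<le> N"
    and E: "exp (- sqrt (1 - 1/(theta w N)^2) * real (N+2-i)) < B"
  shows "gg w N i > (1 + ss w N i)/(2 * ss w N i) * (1 - B)"
proof -
  let ?s = "ss w N i" and ?\<sigma> = "sqrt (1 - 1/(theta w N)^2)" and ?g = "gam w N i"
  have sg: "0 < ?\<sigma>" by (rule sig_pos[OF t])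
  have sb: "?\<sigma> \<le> ?s" "?s \<le> 1" using ss_bounds[OF t N, of i] i by auto
  have s: "0 < ?s" using sg sb by linarith
  have g0: "0 \<le> ?g" unfolding gam_ss using s sb by (intro divide_nonneg_nonneg) auto
  have g1: "?g < 1" unfolding gam_ss using s by simp
  have mono: "?g \<le> gam w N l" if "i \<le> l" "l \<le> N" for l
  proof -
    have "ss w N l \<le> ?s" using ss_mono[OF t N that(1)] .
    moreover have "0 \<le> ss w N l" using ss_bounds[OF t N, of l] that i sg by linarith
    ultimately show ?thesis unfolding gam_ss using s by (simp add: field_simps)
  qed
  have low: "gg w N i \<ge> (1 - ?g ^ (N+2-i)) / (1 - ?g)"
    using gg_lower[OF _ g0 g1 mono] i by auto
  have f: "1/(1-?g) = (1 + ?s)/(2 * ?s)" unfolding gam_ss using s by (simp add: field_simps)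
  have "?g ^ (N+2-i) \<le> exp (-?s) ^ (N+2-i)"
    using gam_exp[of ?s] s sb g0 by (intro power_mono) (auto simp: gam_ss)
  also have "\<dots> = exp (real (N+2-i) * (-?s))" by (rule exp_of_nat_mult[symmetric])
  also have "\<dots> \<le> exp (- ?\<sigma> * real (N+2-i))"
    using mult_right_mono[OF sb(1), of "real (N+2-i)"] by (simp add: mult.commute)
  finally have gB: "?g ^ (N+2-i) < B" using E by simp
  have fp: "(1 + ?s)/(2 * ?s) > 0" using s by simp
  have "(1 + ?s)/(2 * ?s) * (1 - B) < (1 + ?s)/(2 * ?s) * (1 - ?g ^ (N+2-i))"
    using gB fp by (intro mult_strict_left_mono) auto
  also have "\<dots> = (1/(1-?g)) * (1 - ?g ^ (N+2-i))" by (simp only: f)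
  also have "\<dots> = (1 - ?g ^ (N+2-i)) / (1 - ?g)" by simp
  finally show ?thesis using low by simp
qed


lemma delta_bound:
  fixes q v \<theta> :: real
  assumes q: "q > 0" and v: "v > 0" and th: "\<theta> = 1 + v/q^2"
  shows "(1/(q^3*\<theta>^2))/(4*(sqrt(1-1/\<theta>^2))^3) \<le> 1/(3*(v*sqrt v))"
proof -
  define x where "x = v/q^2"
  have x: "x > 0" using q v by (simp add: x_def)
  have t: "\<theta> = 1 + x" using th x_def by simp
  have tp: "\<theta> > 0" using t x by simp
  define y where "y = sqrt x"
  define r where "r = sqrt (x*(2+x))"
  have y: "y > 0" using x by (simp add: y_def)
  have ry: "y \<le> r" unfolding y_def r_def using x by (intro real_sqrt_le_mono) (simp add: algebra_simps)
  have r2: "r^2 = x*(2+x)" unfolding r_def using x by simp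
  have vq: "v = q^2 * x" using q by (simp add: x_def)
  have sv: "sqrt v = q * y" unfolding vq y_def using q x by (simp add: real_sqrt_mult)
  have t2: "\<theta>^2 = 1 + r^2" using r2 t by (simp add: power2_eq_square algebra_simps)
  have s1: "1 - 1/\<theta>^2 = (r/\<theta>)^2"
  proof -
    have "1 - 1/\<theta>^2 = (\<theta>^2 - 1)/\<theta>^2" using tp by (simp add: field_simps)
    also have "\<dots> = (r/\<theta>)^2" using t2 by (simp add: power_divide)
    finally show ?thesis .
  qed
  have sg: "sqrt(1-1/\<theta>^2) = r/\<theta>" unfolding s1 using ry y tp by simp
  have rp: "r > 0" using ry y by linarith
  have L: "(1/(q^3*\<theta>^2))/(4*(sqrt(1-1/\<theta>^2))^3) = \<theta> / (4*q^3*r^3)"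
    unfolding sg using tp rp q by (simp add: field_simps power3_eq_cube power2_eq_square)
  have R: "1/(3*(v*sqrt v)) = 1/(3*q^3*(x*y))"
    unfolding sv by (simp add: vq power3_eq_cube power2_eq_square algebra_simps)
  have key: "3*\<theta>*(x*y) \<le> 4*r^3"
  proof -
    have "3*\<theta>*(x*y) \<le> 4*(x*(2+x))*y" using t x y by (simp add: algebra_simps mult_nonneg_nonneg)
    also have "\<dots> \<le> 4*(x*(2+x))*r" using ry x by (intro mult_left_mono) auto
    also have "\<dots> = 4*r^3" using r2 by (simp add: power3_eq_cube power2_eq_square)
    finally show ?thesis .
  qed
  have "\<theta> / (4*q^3*r^3) \<le> 1/(3*q^3*(x*y))"
    using key q rp x y tp by (simp add: divide_simps)
  then show ?thesis using L R by simp
qed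


lemma sigma_bound:
  fixes q v \<theta> :: real
  assumes q: "q > 0" and v: "v > 0" and th: "\<theta> = 1 + v/q^2" and vs: "v \<le> q^2/2"
  shows "sqrt v \<le> sqrt(1-1/\<theta>^2) * q"
proof -
  define x where "x = v/q^2"
  have x: "x > 0" using q v by (simp add: x_def)
  have xh: "x \<le> 1/2" using vs q by (simp add: x_def divide_simps)
  have t: "\<theta> = 1 + x" using th x_def by simp
  have tp: "\<theta> > 0" using t x by simp
  define y where "y = sqrt x"
  define r where "r = sqrt (x*(2+x))"
  have y: "y > 0" using x by (simp add: y_def)
  have r2: "r^2 = x*(2+x)" unfolding r_def using x by simp
  have vq: "v = q^2 * x" using q by (simp add: x_def)
  have sv: "sqrt v = q * y" unfolding vq y_def using q x by (simp add: real_sqrt_mult)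
  have t2: "\<theta>^2 = 1 + r^2" using r2 t by (simp add: power2_eq_square algebra_simps)
  have s1: "1 - 1/\<theta>^2 = (r/\<theta>)^2"
  proof -
    have "1 - 1/\<theta>^2 = (\<theta>^2 - 1)/\<theta>^2" using tp by (simp add: field_simps)
    also have "\<dots> = (r/\<theta>)^2" using t2 by (simp add: power_divide)
    finally show ?thesis .
  qed
  have r0: "r \<ge> 0" unfolding r_def using x by simp
  have sg: "sqrt(1-1/\<theta>^2) = r/\<theta>" unfolding s1 using r0 tp by simp
  have "\<theta>^2 * x \<le> x*(2+x)"
  proof -
    have "x * x \<le> x * (1/2)" using xh x by (intro mult_left_mono) auto
    then have "x + x^2 \<le> 1" using xh by (simp add: power2_eq_square)
    then have "(1+x)^2 \<le> 2 + x" by (simp add: power2_eq_square algebra_simps)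
    then have "x * (1+x)^2 \<le> x * (2 + x)" using x by (intro mult_left_mono) auto
    then show ?thesis using t by (simp add: mult.commute)
  qed
  then have "sqrt (\<theta>^2 * x) \<le> r" unfolding r_def by (rule real_sqrt_le_mono)
  then have "\<theta> * y \<le> r" using tp unfolding y_def by (simp add: real_sqrt_mult)
  then have "y \<le> r/\<theta>" using tp by (simp add: field_simps)
  then have "q * y \<le> q * (r/\<theta>)" using q by (intro mult_left_mono) auto
  then show ?thesis unfolding sg sv by (simp only: mult.commute)
qed


lemma q_facts:
  assumes N: "N \<ge> 1"
  shows "real N powr (1/3) > 0" "(real N powr (1/3))^3 = real N"
        "theta w N = 1 + w N / (real N powr (1/3))^2"
proof -
  let ?q = "real N powr (1/3)"
  have Np: "real N > 0" using N by simp
  show qp: "?q > 0" using Np by simp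
  have "?q^3 = ?q powr (real 3)" by (rule powr_realpow[symmetric, OF qp])
  also have "\<dots> = real N powr (1/3 * real 3)" by (rule powr_powr)
  also have "1/3 * real 3 = 1" by simp
  finally show "?q^3 = real N" using Np by simp
  have "?q^2 = ?q powr (real 2)" by (rule powr_realpow[symmetric, OF qp])
  also have "\<dots> = real N powr (1/3 * real 2)" by (rule powr_powr)
  also have "1/3 * real 2 = 2/3" by simp
  finally have q2: "?q^2 = real N powr (2/3)" .
  have "real N powr (-2/3) = real N powr (- (2/3))" by simp
  also have "\<dots> = 1 / real N powr (2/3)" by (rule powr_minus_divide)
  finally have "real N powr (-2/3) = 1 / real N powr (2/3)" .
  then show "theta w N = 1 + w N / ?q^2" unfolding theta_def q2 by simp
qed

lemma upper_N:
  assumes N: "N \<ge> 1" and v1: "w N \<ge> 1" and i: "1 \<le> i" "i \<le> N"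
  shows "gg w N i < rr w N i / (2 * (rr w N i - 1)) * (1 + w N powr (-3/2))"
proof -
  let ?q = "real N powr (1/3)" and ?v = "w N" and ?t = "theta w N"
  define \<delta> where "\<delta> = (1/(real N * ?t^2)) / (4 * (sqrt (1 - 1/?t^2))^3)"
  define u where "u = 1/(?v * sqrt ?v)"
  have qf: "?q > 0" "?q^3 = real N" "?t = 1 + ?v / ?q^2" using q_facts[OF N] by auto
  have vp: "?v > 0" using v1 by simp
  have t1: "?t > 1" using qf vp by simp
  have db0: "\<delta> \<le> 1/(3*(?v*sqrt ?v))"
    using delta_bound[OF qf(1) vp qf(3)] unfolding \<delta>_def qf(2) .
  have db: "\<delta> \<le> u/3" using db0 unfolding u_def by simp
  have u0: "u > 0" unfolding u_def using vp by simp
  have u1: "u \<le> 1"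
  proof -
    have "1 \<le> sqrt ?v" using v1 by simp
    then have "1 * 1 \<le> ?v * sqrt ?v" using v1 by (intro mult_mono) auto
    then show ?thesis unfolding u_def by simp
  qed
  have d1: "\<delta> < 1" using db u1 by simp
  have d0: "0 \<le> \<delta>" unfolding \<delta>_def using t1 sig_pos[OF t1] N by simp
  have up: "u = ?v powr (-3/2)"
  proof -
    have "?v powr (3/2) = ?v powr (1 + 1/2)" by simp
    also have "\<dots> = ?v powr 1 * ?v powr (1/2)" by (rule powr_add)
    also have "\<dots> = ?v * sqrt ?v" using vp by (simp add: powr_half_sqrt)
    finally show ?thesis unfolding u_def using vp by (simp add: powr_minus_divide)
  qed
  have g: "gg w N i \<le> (1 + ss w N i)/(2 * ss w N i) / (1 - \<delta>)"
    using upper_core[OF t1 N \<delta>_def d1 i(1)] i by simp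
  have s: "0 < ss w N i" using ss_bounds[OF t1 N, of i] sig_pos[OF t1] i by linarith
  have fp: "(1 + ss w N i)/(2 * ss w N i) > 0" using s by simp
  have "1/(1-\<delta>) < 1 + u"
  proof -
    have "\<delta> * (1+u) \<le> (u/3) * 2" using db u1 d0 by (intro mult_mono) auto
    then have "1 < (1+u)*(1-\<delta>)" using u0 by (simp add: algebra_simps)
    moreover have "0 < 1 - \<delta>" using d1 by simp
    ultimately show ?thesis by (subst pos_divide_less_eq) auto
  qed
  then have "(1 + ss w N i)/(2 * ss w N i) * (1/(1-\<delta>)) < (1 + ss w N i)/(2 * ss w N i) * (1+u)"
    using fp by (intro mult_strict_left_mono) auto
  moreover have "(1 + ss w N i)/(2 * ss w N i) / (1 - \<delta>) = (1 + ss w N i)/(2 * ss w N i) * (1/(1-\<delta>))"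
    by simp
  ultimately have "gg w N i < (1 + ss w N i)/(2 * ss w N i) * (1+u)" using g by linarith
  then show ?thesis unfolding f_ss up .
qed

lemma lower_N:
  assumes N: "N \<ge> 3" and vp: "w N > 0" and vs: "w N \<le> (real N powr (1/3))^2/2"
    and kb: "k * ln (ln (real N)) < sqrt (w N)"
    and i: "1 \<le> i" "real i \<le> real N - real N powr (1/3)"
  shows "gg w N i > rr w N i / (2 * (rr w N i - 1)) * (1 - ln (real N) powr (-k))"
proof -
  let ?q = "real N powr (1/3)" and ?v = "w N" and ?t = "theta w N"
  let ?\<sigma> = "sqrt (1 - 1/?t^2)"
  have N1: "N \<ge> 1" using N by simp
  have qf: "?q > 0" "?q^3 = real N" "?t = 1 + ?v / ?q^2" using q_facts[OF N1] by auto
  have t1: "?t > 1" using qf vp by simp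
  have iN: "i \<le> N" using i qf(1) by linarith
  have sgq: "sqrt ?v \<le> ?\<sigma> * ?q" by (rule sigma_bound[OF qf(1) vp qf(3) vs])
  have sg0: "0 \<le> ?\<sigma>" using sig_pos[OF t1] by linarith
  have nq: "?q \<le> real (N+2-i)" using i iN by (simp add: of_nat_diff)
  have "sqrt ?v \<le> ?\<sigma> * real (N+2-i)" using sgq mult_left_mono[OF nq sg0] by linarith
  then have e1: "exp (- ?\<sigma> * real (N+2-i)) \<le> exp (- sqrt ?v)" by simp
  have lnp: "ln (real N) > 0" using N by simp
  have "exp (- sqrt ?v) < exp (-k * ln (ln (real N)))" using kb by simp
  also have "\<dots> = ln (real N) powr (-k)" using lnp by (simp add: powr_def)
  finally have "exp (- ?\<sigma> * real (N+2-i)) < ln (real N) powr (-k)" using e1 by linarith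
  from lower_core[OF t1 N1 i(1) iN this] show ?thesis unfolding f_ss .
qed

lemma ev_ln: "eventually (\<lambda>N. (ln (real N))^2 \<le> (real N powr (1/3))^2/2) sequentially"
  by real_asymp

lemma ev_big: "eventually (\<lambda>N. exp (exp 1) \<le> real N) sequentially"
proof -
  obtain n :: nat where "exp (exp 1) \<le> real n" using real_arch_simple by blast
  then show ?thesis
    by (intro eventually_mono[OF eventually_ge_at_top[of n]]) (auto intro: order_trans)
qed

lemma big_facts:
  assumes "exp (exp 1) \<le> real N"
  shows "N \<ge> 3" "ln (ln (real N)) \<ge> 1"
proof -
  have e1: "exp 1 \<ge> (2::real)" using exp_ge_add_one_self[of 1] by simp
  have "exp (exp 1) \<ge> 1 + exp (1::real)" using exp_ge_add_one_self[of "exp 1"] by simp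
  then have "real N \<ge> 3" using assms e1 by linarith
  then show "N \<ge> 3" by simp
  have Np: "real N > 0" using \<open>real N \<ge> 3\<close> by simp
  have "ln (exp (exp 1)) \<le> ln (real N)" using assms Np by (subst ln_le_cancel_iff) auto
  then have l1: "exp 1 \<le> ln (real N)" by simp
  have "0 < ln (real N)" using l1 exp_gt_zero[of 1] by linarith
  then have "ln (exp 1) \<le> ln (ln (real N))" using l1 by (subst ln_le_cancel_iff) auto
  then show "ln (ln (real N)) \<ge> 1" by simp
qed

theorem lemma3:
  fixes w :: "nat \<Rightarrow> real"
  assumes wpos: "\<And>N. w N > 0"
    and lim1: "(\<lambda>N. (ln (ln (real N)))^2 / w N) \<longlonglongrightarrow> 0"
    and lim2: "(\<lambda>N. w N / (ln (real N))^2) \<longlonglongrightarrow> 0"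
  shows "(\<forall>k::real. k > 0 \<longrightarrow>
            (\<forall>\<^sub>F N in sequentially. \<forall>i::nat. 3 \<le> i \<and> real i \<le> real N - real N powr (1/3) \<longrightarrow>
               gg w N i > rr w N i / (2 * (rr w N i - 1)) * (1 - ln (real N) powr (-k))))
       \<and> (\<forall>\<^sub>F N in sequentially. \<forall>i::nat. 3 \<le> i \<and> i \<le> N \<longrightarrow>
               gg w N i < rr w N i / (2 * (rr w N i - 1)) * (1 + w N powr (-3/2)))"
proof -
  have ev1: "eventually (\<lambda>N. (ln (ln (real N)))^2 / w N < 1) sequentially"
    by (rule order_tendstoD(2)[OF lim1]) simp
  have ev2: "eventually (\<lambda>N. w N / (ln (real N))^2 < 1) sequentially"
    by (rule order_tendstoD(2)[OF lim2]) simp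
  have w1: "w N \<ge> 1" if "exp (exp 1) \<le> real N" "(ln (ln (real N)))^2 / w N < 1" for N
  proof -
    have "1 \<le> ln (ln (real N))" using big_facts(2)[OF that(1)] .
    then have "1 \<le> (ln (ln (real N)))^2" by (simp add: one_le_power)
    moreover have "(ln (ln (real N)))^2 < w N" using that(2) wpos[of N] by (simp add: divide_less_eq)
    ultimately show ?thesis by linarith
  qed
  have part2: "\<forall>\<^sub>F N in sequentially. \<forall>i::nat. 3 \<le> i \<and> i \<le> N \<longrightarrow>
               gg w N i < rr w N i / (2 * (rr w N i - 1)) * (1 + w N powr (-3/2))"
  proof (rule eventually_mono[OF eventually_conj[OF ev_big ev1]], intro allI impI)
    fix N i assume H: "exp (exp 1) \<le> real N \<and> (ln (ln (real N)))^2 / w N < 1" "3 \<le> i \<and> i \<le> N"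
    have N1: "N \<ge> 1" using big_facts(1)[of N] H by simp
    have W: "w N \<ge> 1" using w1[of N] H by blast
    have "1 \<le> i" "i \<le> N" using H by auto
    from upper_N[where w=w, OF N1 W this] show "gg w N i < rr w N i / (2 * (rr w N i - 1)) * (1 + w N powr (-3/2))" .
  qed
  have part1: "\<forall>\<^sub>F N in sequentially. \<forall>i::nat. 3 \<le> i \<and> real i \<le> real N - real N powr (1/3) \<longrightarrow>
               gg w N i > rr w N i / (2 * (rr w N i - 1)) * (1 - ln (real N) powr (-k))"
    if k: "k > 0" for k :: real
  proof -
    have ev3: "eventually (\<lambda>N. (ln (ln (real N)))^2 / w N < 1/k^2) sequentially"
      by (rule order_tendstoD(2)[OF lim1]) (use k in simp)
    show ?thesis
    proof (rule eventually_mono[OF eventually_conj[OF eventually_conj[OF ev_big ev1] eventually_conj[OF ev2 eventually_conj[OF ev_ln ev3]]]], intro allI impI)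
      fix N i
      assume H: "(exp (exp 1) \<le> real N \<and> (ln (ln (real N)))^2 / w N < 1) \<and>
                 (w N / (ln (real N))^2 < 1 \<and> ((ln (real N))^2 \<le> (real N powr (1/3))^2/2 \<and>
                 (ln (ln (real N)))^2 / w N < 1/k^2))"
        and I: "3 \<le> i \<and> real i \<le> real N - real N powr (1/3)"
      have N3: "N \<ge> 3" using big_facts(1)[of N] H by simp
      have ll: "1 \<le> ln (ln (real N))" using big_facts(2)[of N] H by simp
      have lnp: "ln (real N) > 0" using N3 by simp
      have vp: "w N > 0" by (rule wpos)
      have "w N < (ln (real N))^2" using H lnp by (simp add: divide_less_eq)
      then have vs: "w N \<le> (real N powr (1/3))^2/2" using H by linarith
      have "(ln (ln (real N)))^2 < w N / k^2" using H vp by (simp add: divide_less_eq mult.commute)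
      then have "k^2 * (ln (ln (real N)))^2 < w N" using k by (simp add: pos_less_divide_eq mult.commute)
      then have "(k * ln (ln (real N)))^2 < w N" by (simp add: power_mult_distrib)
      then have "sqrt ((k * ln (ln (real N)))^2) < sqrt (w N)" by (rule real_sqrt_less_mono)
      moreover have "k * ln (ln (real N)) \<ge> 0" using k ll by simp
      ultimately have kb: "k * ln (ln (real N)) < sqrt (w N)" by simp
      show "gg w N i > rr w N i / (2 * (rr w N i - 1)) * (1 - ln (real N) powr (-k))"
        using lower_N[where w=w, OF N3 vp vs kb] I by simp
    qed
  qed
  show ?thesis using part1 part2 by blast
qed

end
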